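(* There exists a Guesser that uses $\log^2 n - \log n + 2$ bits of memory and $2\log n$ (long-lasting) random bits whose expected number of correct guesses is at least $\frac14\ln n$ in a game against any static Dealer.
   Context: Card guessing game: a deck consists of $n$ distinct cards labeled $1,\dots,n$ and the game lasts $n$ turns. In each turn the Dealer selects a card from the cards still in the deck and places it face down; the Guesser then names a card of $[n]$; the card is revealed and discarded. A guess is correct if it equals the drawn card; the score is the number of correct guesses. A Guesser with $m$ bits of memory keeps a memory state in $\{0,1\}^m$ between turns and consists of a (possibly randomized) guessing function (memory state $\mapsto$ guess) and a (possibly randomized) state-transition function (memory state and revealed card $\mapsto$ new memory state). Random bits that are used once ("on the fly") are free and not counted; "random bits" of the Guesser refers to long-lasting random bits that she may access repeatedly throughout the game (they are not counted as memory). A static Dealer fixes an arbitrary arrangement of the deck before the game (possibly knowing the Guesser's algorithm, but not her random bits) and draws the cards in that order. $\log$ is base 2, $\ln$ natural. *)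

theory Defs
  imports "HOL-Probability.Probability"
begin

text \<open>
  A memory state of an m-bit Guesser is an element of
  {0,1}^m, encoded as a natural number below 2^m.  The long-lasting random bits
  (r of them) are encoded as a seed below 2^r, drawn uniformly at random once
  before the game.  On-the-fly randomness is modelled by letting the guessing
  function and the state-transition function return probability distributions.
\<close>

definition valid_guesser ::
  "nat \<Rightarrow> nat \<Rightarrow> nat \<Rightarrow> (nat \<Rightarrow> nat \<Rightarrow> nat pmf)
     \<Rightarrow> (nat \<Rightarrow> nat \<Rightarrow> nat \<Rightarrow> nat pmf) \<Rightarrow> nat \<Rightarrow> bool" where
  "valid_guesser n m r guess upd s0 \<longleftrightarrow>
     s0 < 2 ^ m \<and>
     (\<forall>rho < 2 ^ r. \<forall>s < 2 ^ m. set_pmf (guess rho s) \<subseteq> {1..n}) \<and>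
     (\<forall>rho < 2 ^ r. \<forall>s < 2 ^ m. \<forall>c \<in> {1..n}. set_pmf (upd rho s c) \<subseteq> {..<2 ^ m})"

fun play ::
  "(nat \<Rightarrow> nat \<Rightarrow> nat pmf) \<Rightarrow> (nat \<Rightarrow> nat \<Rightarrow> nat \<Rightarrow> nat pmf)
     \<Rightarrow> nat \<Rightarrow> nat \<Rightarrow> nat list \<Rightarrow> nat pmf" where
  "play guess upd rho s [] = return_pmf 0"
| "play guess upd rho s (c # cs) =
     bind_pmf (guess rho s) (\<lambda>x.
     bind_pmf (upd rho s c) (\<lambda>s'.
     bind_pmf (play guess upd rho s' cs) (\<lambda>k.
     return_pmf (k + (if x = c then 1 else 0)))))"

text \<open>Expected score against a static Dealer whose arrangement of the deck is the list
  deck (the first element is drawn first); the seed is uniform over r random bits.\<close>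
definition expected_score ::
  "nat \<Rightarrow> (nat \<Rightarrow> nat \<Rightarrow> nat pmf) \<Rightarrow> (nat \<Rightarrow> nat \<Rightarrow> nat \<Rightarrow> nat pmf)
     \<Rightarrow> nat \<Rightarrow> nat list \<Rightarrow> real" where
  "expected_score r guess upd s0 deck =
     measure_pmf.expectation
       (bind_pmf (pmf_of_set {..<(2::nat) ^ r}) (\<lambda>rho. play guess upd rho s0 deck)) real"

end

theory Submission
  imports Defs "HOL-Analysis.Harmonic_Numbers"
begin


fun sc :: "(nat \<Rightarrow> nat \<Rightarrow> nat) \<Rightarrow> (nat \<Rightarrow> nat \<Rightarrow> nat \<Rightarrow> nat) \<Rightarrow> nat \<Rightarrow> nat \<Rightarrow> nat list \<Rightarrow> nat" where
  "sc G U rho s [] = 0"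
| "sc G U rho s (c # cs) = sc G U rho (U rho s c) cs + (if G rho s = c then 1 else 0)"

lemma play_det:
  "play (\<lambda>rho s. return_pmf (G rho s)) (\<lambda>rho s c. return_pmf (U rho s c)) rho s cs
   = return_pmf (sc G U rho s cs)"
  by (induction cs arbitrary: s) (simp_all add: bind_return_pmf)

lemma expected_det:
  "expected_score r (\<lambda>rho s. return_pmf (G rho s)) (\<lambda>rho s c. return_pmf (U rho s c)) s0 deck
   = (\<Sum>rho<2^r. real (sc G U rho s0 deck)) / 2^r"
proof -
  have "bind_pmf (pmf_of_set {..<(2::nat)^r}) (\<lambda>rho. return_pmf (sc G U rho s0 deck))
        = map_pmf (\<lambda>rho. sc G U rho s0 deck) (pmf_of_set {..<(2::nat)^r})"
    by (simp add: map_pmf_def)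
  then show ?thesis
    unfolding expected_score_def play_det
    by (simp, subst integral_pmf_of_set) (auto simp: lessThan_empty_iff)
qed



lemma mr_bound:
  fixes M f :: "nat \<Rightarrow> nat"
  assumes "\<forall>k<L. f k < M k"
  shows "(\<Sum>k<L. f k * prod M {..<k}) < prod M {..<L}"
  using assms
proof (induction L)
  case 0 then show ?case by simp
next
  case (Suc L)
  have "(\<Sum>k<Suc L. f k * prod M {..<k}) = (\<Sum>k<L. f k * prod M {..<k}) + f L * prod M {..<L}"
    by simp
  also have "\<dots> < prod M {..<L} + f L * prod M {..<L}" using Suc by simp
  also have "\<dots> = (1 + f L) * prod M {..<L}" by simp
  also have "\<dots> \<le> M L * prod M {..<L}" using Suc.prems by (intro mult_right_mono) auto
  also have "\<dots> = prod M {..<Suc L}" by simp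
  finally show ?case .
qed

lemma mr_dec:
  fixes M f :: "nat \<Rightarrow> nat"
  assumes "\<forall>k<L. f k < M k" "\<forall>k. M k > 0" "j < L"
  shows "(\<Sum>k<L. f k * prod M {..<k}) div prod M {..<j} mod M j = f j"
  using assms
proof (induction L)
  case 0 then show ?case by simp
next
  case (Suc L)
  let ?S = "\<Sum>k<L. f k * prod M {..<k}"
  have Slt: "?S < prod M {..<L}" using Suc.prems by (intro mr_bound) auto
  have Ppos: "\<And>i. prod M {..<i} > 0" using Suc.prems(2) by (simp add: prod_pos)
  have eq: "(\<Sum>k<Suc L. f k * prod M {..<k}) = ?S + f L * prod M {..<L}" by simp
  show ?case
  proof (cases "j = L")
    case True
    have "(?S + f L * prod M {..<L}) div prod M {..<L} = f L"
      using Slt Ppos[of L] by (simp add: div_add1_eq)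
    then show ?thesis using True eq Suc.prems by simp
  next
    case False
    then have jL: "j < L" using Suc.prems by simp
    have "prod M {..<Suc j} dvd prod M {..<L}"
      by (rule prod_dvd_prod_subset) (use jL in auto)
    then obtain R where R: "prod M {..<L} = prod M {..<j} * M j * R"
      by (auto simp: dvd_def)
    have "(?S + f L * prod M {..<L}) div prod M {..<j} = ?S div prod M {..<j} + M j * (f L * R)"
    proof -
      have eq2: "?S + f L * prod M {..<L} = ?S + (M j * (f L * R)) * prod M {..<j}"
        unfolding R by (simp add: ac_simps)
      show ?thesis unfolding eq2 using Ppos[of j] by simp
    qed
    then have "(?S + f L * prod M {..<L}) div prod M {..<j} mod M j = ?S div prod M {..<j} mod M j"
      by simp
    also have "\<dots> = f j" using Suc.IH Suc.prems jL by simp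
    finally show ?thesis using eq by simp
  qed
qed



lemma odd_decomp:
  fixes g :: int assumes "g \<noteq> 0" shows "\<exists>e q. g = 2^e * q \<and> odd q"
  using assms
proof (induction "nat \<bar>g\<bar>" arbitrary: g rule: less_induct)
  case less
  show ?case
  proof (cases "odd g")
    case True then show ?thesis by (intro exI[of _ 0] exI[of _ g]) simp
  next
    case False
    then obtain h where h: "g = 2 * h" by auto
    with less.prems have "h \<noteq> 0" by simp
    moreover have "nat \<bar>h\<bar> < nat \<bar>g\<bar>" using h \<open>h \<noteq> 0\<close> by simp
    ultimately obtain e q where "h = 2^e * q" "odd q" using less.hyps by blast
    then show ?thesis using h by (intro exI[of _ "Suc e"] exI[of _ q]) simp
  qed
qed

lemma pow_split: "j \<le> k \<Longrightarrow> (b::'a::comm_monoid_mult)^k = b^(k-j) * b^j"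
  by (metis le_add_diff_inverse2 power_add)

lemma zdiv_lt:
  fixes x a b :: int assumes b: "0 < b" and x: "x < a * b" shows "x div b < a"
proof (rule ccontr)
  assume "\<not> x div b < a"
  then have "a \<le> x div b" by simp
  then have "a * b \<le> x div b * b" using b by (simp add: mult_right_mono)
  moreover have "x div b * b + x mod b = x" by simp
  moreover have "0 \<le> x mod b" using b by simp
  ultimately show False using x by linarith
qed

lemma KL:
  fixes L k :: nat and u g :: int
  assumes kL: "k \<le> L" and u0: "0 \<le> u" and uk: "u < 2^k" and g0: "g \<noteq> 0" and gL: "\<bar>g\<bar> < 2^L"
  shows "card {a::nat. a < 2^L \<and> (u + (2 * int a + 1) * g) mod 2^L < 2^k} \<le> 2^k"
proof -
  obtain e q where g: "g = 2^e * q" and oo: "odd q" using odd_decomp g0 by blast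
  have "q \<noteq> 0" using oo by auto
  then have "(2::int)^e \<le> \<bar>g\<bar>" unfolding g by (simp add: abs_mult)
  then have "(2::int)^e < 2^L" using gL by linarith
  then have eL: "e < L" using power_strict_increasing_iff[of "2::int" e L] by simp
  define V where "V = {a::nat. a < 2^L \<and> (u + (2 * int a + 1) * g) mod 2^L < 2^k}"
  define vv where "vv a = (u + (2 * int a + 1) * g) mod 2^L" for a
  have vv0: "0 \<le> vv a" for a unfolding vv_def by simp
  have key: "(2::int)^(Suc e) dvd (vv a - u - 2^e)" for a
  proof -
    let ?A = "2 * int a + 1"
    have d1: "(2::int)^L dvd (u + ?A * g - vv a)" unfolding vv_def
      by (metis minus_mod_eq_mult_div dvd_triv_left)
    have "(2::int)^(Suc e) dvd 2^L" using eL by (intro le_imp_power_dvd) simp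
    with d1 have d2: "(2::int)^(Suc e) dvd (u + ?A * g - vv a)" by (rule dvd_trans[rotated])
    have "odd (?A * q)" using oo by simp
    then have "2 dvd (?A * q - 1)" by simp
    then have d3: "(2::int)^(Suc e) dvd (?A * g - 2^e)"
    proof -
      assume "2 dvd (?A * q - 1)"
      then obtain t where t: "?A * q - 1 = 2 * t" by blast
      have "?A * g - 2^e = 2^e * (?A * q - 1)" unfolding g by (simp add: algebra_simps)
      also have "\<dots> = 2^(Suc e) * t" using t by simp
      finally show ?thesis by simp
    qed
    have "vv a - u - 2^e = (?A * g - 2^e) - (u + ?A * g - vv a)" by simp
    then show ?thesis using d2 d3 by (metis dvd_diff)
  qed
  show ?thesis
  proof (cases "k \<le> e")
    case True
    have "V = {}"
    proof (rule ccontr)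
      assume "V \<noteq> {}"
      then obtain a where a: "a \<in> V" by blast
      then have vk: "vv a < 2^k" unfolding V_def vv_def by simp
      have "(2::int)^k \<le> 2^e" using True by (simp add: power_increasing)
      obtain t where t: "vv a - u - 2^e = 2^(Suc e) * t" using key[of a] by blast
      show False
      proof (cases "t \<ge> 0")
        case True
        then have "0 \<le> (2::int)^(Suc e) * t" by simp
        then have "vv a - u \<ge> 2^e" using t by linarith
        then show False using vk u0 \<open>(2::int)^k \<le> 2^e\<close> by simp
      next
        case False
        then have "t \<le> -1" by simp
        then have "(2::int)^(Suc e) * t \<le> 2^(Suc e) * (-1)" by (intro mult_left_mono) auto
        moreover have "(2::int)^(Suc e) = 2 * 2^e" by simp
        ultimately have "vv a - u \<le> -(2^e)" using t by linarith
        then show False using vv0[of a] uk \<open>(2::int)^k \<le> 2^e\<close> by simp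
      qed
    qed
    then have "card V \<le> 2^k" by simp
    then show ?thesis unfolding V_def .
  next
    case False
    then have ek: "Suc e \<le> k" by simp
    define \<phi> where "\<phi> a = (nat (vv a div 2^(Suc e)), a div 2^(L - Suc e))" for a
    have img: "\<phi> ` V \<subseteq> {..<2^(k - Suc e)} \<times> {..<(2::nat)^(Suc e)}"
    proof
      fix p assume "p \<in> \<phi> ` V"
      then obtain a where a: "a \<in> V" and p: "p = \<phi> a" by blast
      have vk: "vv a < 2^k" using a unfolding V_def vv_def by simp
      have "(2::int)^k = 2^(k - Suc e) * 2^(Suc e)" using ek by (rule pow_split)
      then have "vv a div 2^(Suc e) < 2^(k - Suc e)" using vk
        by (intro zdiv_lt) auto
      then have 1: "nat (vv a div 2^(Suc e)) < 2^(k - Suc e)"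
        by (subst nat_less_iff) (use vv0[of a] in \<open>auto simp: pos_imp_zdiv_nonneg_iff\<close>)
      have "(2::nat)^L = 2^(Suc e) * 2^(L - Suc e)" using pow_split[of "Suc e" L 2] eL by (simp add: mult.commute)
      then have 2: "a div 2^(L - Suc e) < 2^(Suc e)" using a unfolding V_def
        by (simp add: div_less_iff_less_mult)
      show "p \<in> {..<2^(k - Suc e)} \<times> {..<(2::nat)^(Suc e)}" using 1 2 p \<phi>_def by simp
    qed
    have inj: "inj_on \<phi> V"
    proof (rule inj_onI)
      fix a1 a2 assume a1: "a1 \<in> V" and a2: "a2 \<in> V" and eq: "\<phi> a1 = \<phi> a2"
      have d: "vv a1 div 2^(Suc e) = vv a2 div 2^(Suc e)"
        using eq vv0[of a1] vv0[of a2] unfolding \<phi>_def by (simp add: nat_eq_iff2 pos_imp_zdiv_nonneg_iff)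
      have m1: "vv a1 mod 2^(Suc e) = (u + 2^e) mod 2^(Suc e)" using key[of a1]
        by (metis diff_diff_eq mod_eq_dvd_iff)
      have m2: "vv a2 mod 2^(Suc e) = (u + 2^e) mod 2^(Suc e)" using key[of a2]
        by (metis diff_diff_eq mod_eq_dvd_iff)
      have veq: "vv a1 = vv a2" using d m1 m2 by (metis div_mod_decomp_int)
      then have "(u + (2 * int a1 + 1) * g) mod 2^L = (u + (2 * int a2 + 1) * g) mod 2^L"
        unfolding vv_def .
      then have "(2::int)^L dvd ((u + (2 * int a1 + 1) * g) - (u + (2 * int a2 + 1) * g))"
        by (simp add: mod_eq_dvd_iff)
      moreover have "(u + (2 * int a1 + 1) * g) - (u + (2 * int a2 + 1) * g)
                     = 2^(Suc e) * ((int a1 - int a2) * q)" unfolding g by (simp add: algebra_simps)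
      moreover have "(2::int)^L = 2^(Suc e) * 2^(L - Suc e)" using pow_split[of "Suc e" L 2] eL by (simp add: mult.commute)
      ultimately have "(2::int)^(Suc e) * 2^(L - Suc e) dvd 2^(Suc e) * ((int a1 - int a2) * q)"
        by simp
      then have "(2::int)^(L - Suc e) dvd ((int a1 - int a2) * q)" by simp
      moreover have "coprime ((2::int)^(L - Suc e)) q" using oo by simp
      ultimately have "(2::int)^(L - Suc e) dvd (int a1 - int a2)"
        using coprime_dvd_mult_left_iff by blast
      then have "int a1 mod 2^(L - Suc e) = int a2 mod 2^(L - Suc e)" by (simp add: mod_eq_dvd_iff)
      then have "a1 mod 2^(L - Suc e) = a2 mod 2^(L - Suc e)"
        by (metis of_nat_eq_iff of_nat_numeral of_nat_power zmod_int)
      moreover have "a1 div 2^(L - Suc e) = a2 div 2^(L - Suc e)" using eq unfolding \<phi>_def by simp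
      ultimately show "a1 = a2" by (metis div_mod_decomp)
    qed
    have "card V \<le> card ({..<(2::nat)^(k - Suc e)} \<times> {..<(2::nat)^(Suc e)})"
      using card_inj_on_le[OF inj img] by simp
    also have "\<dots> = 2^(k - Suc e) * 2^(Suc e)" by (simp add: card_cartesian_product)
    also have "\<dots> = 2^k" using pow_split[OF ek, of "2::nat"] by simp
    finally show ?thesis unfolding V_def .
  qed
qed



definition sig :: "nat \<Rightarrow> nat \<Rightarrow> nat \<Rightarrow> nat" where
  "sig L rho x = ((2 * (rho div 2^L) + 1) * x + rho mod 2^L) mod 2^L"

lemma sig_lt: "sig L rho x < 2^L"
  unfolding sig_def by simp

lemma card_pairs:
  fixes N :: nat assumes N: "N > 0"
  shows "card {rho. rho < N*N \<and> P (rho div N) (rho mod N)} = (\<Sum>a<N. card {b. b < N \<and> P a b})"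
proof -
  let ?f = "\<lambda>(a,b). a*N + b"
  let ?S = "SIGMA a:{..<N}. {b. b<N \<and> P a b}"
  have eq: "{rho. rho < N*N \<and> P (rho div N) (rho mod N)} = ?f ` ?S"
  proof (intro equalityI subsetI)
    fix rho assume "rho \<in> {rho. rho < N*N \<and> P (rho div N) (rho mod N)}"
    then have r: "rho < N*N" "P (rho div N) (rho mod N)" by auto
    have "rho div N < N" using r(1) N by (simp add: div_less_iff_less_mult)
    moreover have "rho mod N < N" using N by simp
    moreover have "rho = ?f (rho div N, rho mod N)" by simp
    ultimately show "rho \<in> ?f ` ?S" using r(2) by blast
  next
    fix rho assume "rho \<in> ?f ` ?S"
    then obtain a b where ab: "a < N" "b < N" "P a b" "rho = a*N + b" by auto
    have "a*N + b < N*N"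
    proof -
      have "a*N + b < a*N + N" using ab by simp
      also have "\<dots> = (a+1)*N" by simp
      also have "\<dots> \<le> N*N" using ab(1) by (intro mult_right_mono) auto
      finally show ?thesis .
    qed
    moreover have "(a*N+b) div N = a" "(a*N+b) mod N = b" using ab N by auto
    ultimately show "rho \<in> {rho. rho < N*N \<and> P (rho div N) (rho mod N)}" using ab by auto
  qed
  have inj: "inj_on ?f ?S"
  proof (rule inj_onI, clarify)
    fix a b a' b' assume e: "a*N+b = a'*N+b'" and bb: "b < N" "b' < N"
    have "(a*N+b) mod N = b" "(a'*N+b') mod N = b'" using bb by auto
    then have "b = b'" using e by simp
    then have "a*N = a'*N" using e by simp
    then show "a = a' \<and> b = b'" using N \<open>b = b'\<close> by simp
  qed
  have "card {rho. rho < N*N \<and> P (rho div N) (rho mod N)} = card ?S"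
    unfolding eq using inj by (rule card_image)
  also have "\<dots> = (\<Sum>a<N. card {b. b < N \<and> P a b})"
    by (rule card_SigmaI) auto
  finally show ?thesis .
qed

lemma single_b:
  fixes N A u :: nat assumes "u < N"
  shows "{b. b < N \<and> (A + b) mod N = u} = {(u + N - A mod N) mod N}"
proof -
  have N: "N > 0" using assms by simp
  let ?b0 = "(u + N - A mod N) mod N"
  have h0: "(A + ?b0) mod N = u"
  proof -
    have "(A + ?b0) mod N = (A mod N + (u + N - A mod N)) mod N" by (simp add: mod_add_right_eq mod_add_left_eq)
    also have "A mod N + (u + N - A mod N) = u + N" using N
      by (metis add.commute le_add2 le_add_diff_inverse less_imp_le_nat mod_less_divisor order_trans)
    also have "(u + N) mod N = u" using assms by simp
    finally show ?thesis .
  qed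
  show ?thesis
  proof (intro equalityI subsetI)
    fix b assume "b \<in> {b. b < N \<and> (A + b) mod N = u}"
    then have b: "b < N" "(A + b) mod N = u" by auto
    then have "(A + b) mod N = (A + ?b0) mod N" using h0 by simp
    then have "int (A + b) mod int N = int (A + ?b0) mod int N"
      by (metis zmod_int)
    then have "int N dvd (int (A + b) - int (A + ?b0))" by (simp only: mod_eq_dvd_iff)
    then have "int N dvd (int b - int ?b0)" by simp
    then have "int b mod int N = int ?b0 mod int N" by (simp only: mod_eq_dvd_iff)
    then have "b mod N = ?b0 mod N" by (metis zmod_int of_nat_eq_iff)
    then show "b \<in> {?b0}" using b(1) by simp
  next
    fix b assume "b \<in> {?b0}"
    then show "b \<in> {b. b < N \<and> (A + b) mod N = u}" using h0 N by simp
  qed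
qed

lemma U1:
  assumes "u < 2^L"
  shows "card {rho. rho < 2^L * 2^L \<and> sig L rho d = u} = 2^L"
proof -
  have "card {rho. rho < 2^L * 2^L \<and> sig L rho d = u}
      = (\<Sum>a<(2::nat)^L. card {b. b < 2^L \<and> ((2*a+1)*d + b) mod 2^L = u})"
    unfolding sig_def by (rule card_pairs) simp
  also have "\<dots> = (\<Sum>a<(2::nat)^L. 1)"
    by (intro sum.cong refl) (simp add: single_b[OF assms])
  finally show ?thesis by simp
qed

lemma U2:
  assumes u: "u < 2^k" and kL: "k \<le> L" and cd: "c \<noteq> d" and c: "1 \<le> c" "c \<le> 2^L" and d: "1 \<le> d" "d \<le> 2^L"
  shows "card {rho. rho < 2^L * 2^L \<and> sig L rho d = u \<and> sig L rho c < 2^k} \<le> 2^k"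
proof -
  let ?N = "(2::nat)^L"
  have uN: "u < ?N" using u kL by (meson order_less_le_trans one_le_numeral power_increasing)
  define cond where "cond a = ((int u + (2 * int a + 1) * (int c - int d)) mod 2^L < 2^k)" for a
  have each: "card {b. b < ?N \<and> ((2*a+1)*d + b) mod ?N = u \<and> ((2*a+1)*c + b) mod ?N < 2^k}
              \<le> (if cond a then 1 else 0)" for a
  proof -
    let ?B = "{b. b < ?N \<and> ((2*a+1)*d + b) mod ?N = u \<and> ((2*a+1)*c + b) mod ?N < 2^k}"
    have sub: "?B \<subseteq> {b. b < ?N \<and> ((2*a+1)*d + b) mod ?N = u}" by auto
    have fin: "finite ?B" by simp
    have "card ?B \<le> 1"
      using card_mono[OF _ sub] single_b[OF uN, of "(2*a+1)*d"] by simp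
    moreover have "?B \<noteq> {} \<Longrightarrow> cond a"
    proof -
      assume "?B \<noteq> {}"
      then obtain b where b: "((2*a+1)*d + b) mod ?N = u" "((2*a+1)*c + b) mod ?N < 2^k" by auto
      have "int (((2*a+1)*c + b) mod ?N) = (int ((2*a+1)*d + b) + (2 * int a + 1) * (int c - int d)) mod 2^L"
        by (simp add: zmod_int algebra_simps)
      also have "\<dots> = (int (((2*a+1)*d + b) mod ?N) + (2 * int a + 1) * (int c - int d)) mod 2^L"
        by (simp add: zmod_int mod_add_left_eq)
      also have "\<dots> = (int u + (2 * int a + 1) * (int c - int d)) mod 2^L" using b(1) by simp
      finally show "cond a" unfolding cond_def using b(2)
        by (metis of_nat_less_iff of_nat_numeral of_nat_power)
    qed
    ultimately show ?thesis by (cases "?B = {}") auto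
  qed
  have "card {rho. rho < 2^L * 2^L \<and> sig L rho d = u \<and> sig L rho c < 2^k}
      = (\<Sum>a<?N. card {b. b < ?N \<and> ((2*a+1)*d + b) mod ?N = u \<and> ((2*a+1)*c + b) mod ?N < 2^k})"
    unfolding sig_def by (rule card_pairs) simp
  also have "\<dots> \<le> (\<Sum>a<?N. (if cond a then 1 else 0))"
    by (intro sum_mono each)
  also have "\<dots> = card {a. a < ?N \<and> cond a}"
    by (simp add: sum.If_cases lessThan_def Collect_conj_eq Int_commute)
  also have "\<dots> \<le> 2^k" unfolding cond_def
  proof (rule KL)
    show "int c - int d \<noteq> 0" using cd by simp
    have "int c \<le> int (2^L)" "int d \<le> int (2^L)" using c d by simp_all
    moreover have "int (2^L) = (2::int)^L" by simp
    ultimately show "\<bar>int c - int d\<bar> < 2^L" using c d by linarith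
  qed (use kL u in auto)
  finally show ?thesis .
qed



lemma sig_inj:
  assumes x: "1 \<le> x" "x \<le> 2^L" and y: "1 \<le> y" "y \<le> 2^L" and e: "sig L rho x = sig L rho y"
  shows "x = y"
proof -
  let ?a = "2 * (rho div 2^L) + 1" and ?b = "rho mod 2^L"
  have "int ((?a * x + ?b) mod 2^L) = int ((?a * y + ?b) mod 2^L)" using e unfolding sig_def by simp
  then have "int (?a * x + ?b) mod 2^L = int (?a * y + ?b) mod 2^L" by (simp add: zmod_int)
  then have "(2::int)^L dvd (int (?a * x + ?b) - int (?a * y + ?b))" by (simp only: mod_eq_dvd_iff)
  then have "(2::int)^L dvd (int ?a * (int x - int y))" by (simp add: algebra_simps)
  moreover have "coprime ((2::int)^L) (int ?a)" by simp
  ultimately have dv: "(2::int)^L dvd (int x - int y)" using coprime_dvd_mult_right_iff by blast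
  have "int x \<le> int (2^L)" "int y \<le> int (2^L)" using x y by simp_all
  moreover have "int (2^L) = (2::int)^L" by simp
  ultimately have "\<bar>int x - int y\<bar> < 2^L" using x y by linarith
  have "int x - int y = 0"
  proof (rule ccontr)
    assume "int x - int y \<noteq> 0"
    from dvd_imp_le_int[OF this dv] have "\<bar>(2::int)^L\<bar> \<le> \<bar>int x - int y\<bar>" .
    then show False using \<open>\<bar>int x - int y\<bar> < 2^L\<close> by simp
  qed
  then show ?thesis by simp
qed

lemma card_fibers:
  assumes "finite A" "finite B"
  shows "card {x\<in>A. f x \<in> B} = (\<Sum>u\<in>B. card {x\<in>A. f x = u})"
proof -
  have "{x\<in>A. f x \<in> B} = (\<Union>u\<in>B. {x\<in>A. f x = u})" by auto
  moreover have "card (\<Union>u\<in>B. {x\<in>A. f x = u}) = (\<Sum>u\<in>B. card {x\<in>A. f x = u})"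
    by (rule card_UN_disjoint) (use assms in auto)
  ultimately show ?thesis by simp
qed

definition band :: "nat \<Rightarrow> nat set" where
  "band k = (if k = 0 then {0} else {2^(k-1)..<2^k})"

lemma band_lt: "u \<in> band k \<Longrightarrow> u < 2^k"
  unfolding band_def by (auto split: if_splits)

lemma band_card: "k \<ge> 1 \<Longrightarrow> card (band k) = 2^(k-1)"
proof -
  assume "k \<ge> 1"
  then have "(2::nat)^k = 2 * 2^(k-1)" by (metis Suc_diff_le diff_Suc_1 power_Suc)
  then show ?thesis using \<open>k \<ge> 1\<close> unfolding band_def by simp
qed

lemma band_disj: "u \<in> band i \<Longrightarrow> u \<in> band j \<Longrightarrow> i = j"
proof (rule ccontr)
  assume u: "u \<in> band i" "u \<in> band j" and ne: "i \<noteq> j"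
  have key: "u \<in> band a \<Longrightarrow> u \<in> band b \<Longrightarrow> a < b \<Longrightarrow> False" for a b
  proof -
    assume ua: "u \<in> band a" and ub: "u \<in> band b" and ab: "a < b"
    have "u < 2^a" using ua by (rule band_lt)
    moreover have "(2::nat)^a \<le> 2^(b-1)" using ab by (intro power_increasing) auto
    moreover have "2^(b-1) \<le> u" using ub ab unfolding band_def by auto
    ultimately show False by simp
  qed
  show False using ne key[OF u] key[OF u(2) u(1)] by linarith
qed

lemma count_good:
  fixes n L K d :: nat and Rem :: "nat set"
  assumes nN: "n \<le> 2^L" and Rem: "Rem \<subseteq> {1..n}" and d: "d \<in> Rem" and K: "K < L"
  shows "real (card {rho. rho < 2^L*2^L \<and> (\<exists>k<L. {x\<in>Rem. sig L rho x < 2^k} = {d})})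
    \<ge> real (2^L) + (\<Sum>k=1..K. 2^(k-1) * real (2^L) - (real (card Rem) - 1) * 2^(k-1) * 2^k)"
proof -
  define N where "N = (2::nat)^L"
  define T where "T = {rho::nat. rho < N*N}"
  define E where "E k = {rho\<in>T. sig L rho d \<in> band k \<and> (\<forall>c\<in>Rem-{d}. 2^k \<le> sig L rho c)}" for k
  define Good where "Good = {rho. rho < 2^L*2^L \<and> (\<exists>k<L. {x\<in>Rem. sig L rho x < 2^k} = {d})}"
  have finT: "finite T" unfolding T_def by simp
  have finR: "finite Rem" using Rem finite_subset by blast
  have inR: "x \<in> Rem \<Longrightarrow> 1 \<le> x \<and> x \<le> 2^L" for x using Rem nN by auto
  have sub: "(\<Union>k\<in>{0..K}. E k) \<subseteq> Good"
  proof
    fix rho assume "rho \<in> (\<Union>k\<in>{0..K}. E k)"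
    then obtain k where k: "k \<le> K" "rho \<in> E k" by auto
    have "{x\<in>Rem. sig L rho x < 2^k} = {d}"
    proof (intro equalityI subsetI)
      fix x assume x: "x \<in> {x\<in>Rem. sig L rho x < 2^k}"
      show "x \<in> {d}"
      proof (rule ccontr)
        assume "x \<notin> {d}"
        then have "x \<in> Rem - {d}" using x by auto
        then have "2^k \<le> sig L rho x" using k(2) unfolding E_def by auto
        then show False using x by simp
      qed
    next
      fix x assume "x \<in> {d}"
      then show "x \<in> {x\<in>Rem. sig L rho x < 2^k}" using d k(2) band_lt unfolding E_def by auto
    qed
    moreover have "k < L" using k K by simp
    moreover have "rho < 2^L * 2^L" using k(2) unfolding E_def T_def N_def by simp
    ultimately show "rho \<in> Good" unfolding Good_def by blast
  qed
  have finE: "finite (E k)" for k unfolding E_def using finT by simp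
  have "card (\<Union>k\<in>{0..K}. E k) = (\<Sum>k\<in>{0..K}. card (E k))"
  proof (rule card_UN_disjoint)
    show "\<forall>i\<in>{0..K}. \<forall>j\<in>{0..K}. i \<noteq> j \<longrightarrow> E i \<inter> E j = {}"
      unfolding E_def using band_disj by blast
  qed (use finE in auto)
  moreover have "card (\<Union>k\<in>{0..K}. E k) \<le> card Good"
    by (rule card_mono[OF _ sub]) (simp add: Good_def)
  ultimately have c1: "(\<Sum>k\<in>{0..K}. card (E k)) \<le> card Good" by simp
  have E0: "E 0 = {rho\<in>T. sig L rho d = 0}"
  proof -
    have nz: "sig L rho c \<noteq> 0" if "sig L rho d = 0" "c \<in> Rem - {d}" for rho c
      using that sig_inj[of c L d rho] inR d by auto
    have h: "1 \<le> sig L rho c" if "sig L rho d = 0" "c \<in> Rem - {d}" for rho c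
    proof -
      have "sig L rho c \<noteq> 0" by (rule nz[OF that])
      then show ?thesis by simp
    qed
    show ?thesis
    proof (intro equalityI subsetI)
      fix rho assume "rho \<in> E 0" then show "rho \<in> {rho\<in>T. sig L rho d = 0}"
        unfolding E_def band_def by simp
    next
      fix rho assume "rho \<in> {rho\<in>T. sig L rho d = 0}"
      then show "rho \<in> E 0" unfolding E_def band_def using h by simp
    qed
  qed
  have cE0: "card (E 0) = N"
    unfolding E0 T_def N_def using U1[of 0 L d] by simp
  have cEk: "real (card (E k)) \<ge> 2^(k-1) * real N - (real (card Rem) - 1) * 2^(k-1) * 2^k"
    if k: "1 \<le> k" "k \<le> K" for k
  proof -
    define A where "A = {rho\<in>T. sig L rho d \<in> band k}"
    define F where "F c = {rho\<in>T. sig L rho d \<in> band k \<and> sig L rho c < 2^k}" for c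
    have kL: "k \<le> L" using k K by simp
    have "A \<subseteq> E k \<union> (\<Union>c\<in>Rem-{d}. F c)"
      unfolding A_def E_def F_def by (auto simp: not_le)
    then have "card A \<le> card (E k \<union> (\<Union>c\<in>Rem-{d}. F c))"
      by (intro card_mono) (use finE finT finR in \<open>auto simp: F_def\<close>)
    also have "\<dots> \<le> card (E k) + card (\<Union>c\<in>Rem-{d}. F c)" by (rule card_Un_le)
    also have "card (\<Union>c\<in>Rem-{d}. F c) \<le> (\<Sum>c\<in>Rem-{d}. card (F c))" by (rule card_UN_le) (use finR in simp)
    finally have a: "card A \<le> card (E k) + (\<Sum>c\<in>Rem-{d}. card (F c))" by simp
    have "card A = (\<Sum>u\<in>band k. card {rho\<in>T. sig L rho d = u})"
      unfolding A_def by (rule card_fibers) (use finT in \<open>auto simp: band_def\<close>)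
    also have "\<dots> = (\<Sum>u\<in>band k. N)"
    proof (rule sum.cong[OF refl])
      fix u assume "u \<in> band k"
      then have "u < 2^L" using band_lt[of u k] kL
        by (meson order_less_le_trans one_le_numeral power_increasing)
      then show "card {rho\<in>T. sig L rho d = u} = N" unfolding T_def N_def using U1[of u L d] by simp
    qed
    also have "\<dots> = 2^(k-1) * N" using band_card k by simp
    finally have cA: "card A = 2^(k-1) * N" .
    have cF: "card (F c) \<le> 2^(k-1) * 2^k" if c: "c \<in> Rem - {d}" for c
    proof -
      have "F c = {rho\<in>{rho\<in>T. sig L rho c < 2^k}. sig L rho d \<in> band k}" unfolding F_def by auto
      then have "card (F c) = (\<Sum>u\<in>band k. card {rho\<in>{rho\<in>T. sig L rho c < 2^k}. sig L rho d = u})"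
        using card_fibers[of "{rho\<in>T. sig L rho c < 2^k}" "band k"] finT by (simp add: band_def)
      also have "\<dots> \<le> (\<Sum>u\<in>band k. 2^k)"
      proof (rule sum_mono)
        fix u assume "u \<in> band k"
        then have u: "u < 2^k" by (rule band_lt)
        have "{rho\<in>{rho\<in>T. sig L rho c < 2^k}. sig L rho d = u}
              = {rho. rho < 2^L * 2^L \<and> sig L rho d = u \<and> sig L rho c < 2^k}"
          unfolding T_def N_def by auto
        also have "card \<dots> \<le> 2^k" using U2[OF u kL, of c d] c inR d by auto
        finally show "card {rho\<in>{rho\<in>T. sig L rho c < 2^k}. sig L rho d = u} \<le> 2^k" .
      qed
      also have "\<dots> = 2^(k-1) * 2^k" using band_card k by simp
      finally show ?thesis .
    qed
    have "(\<Sum>c\<in>Rem-{d}. card (F c)) \<le> (\<Sum>c\<in>Rem-{d}. 2^(k-1) * 2^k)"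
      by (rule sum_mono) (rule cF)
    also have "\<dots> = (card Rem - 1) * (2^(k-1) * 2^k)" using finR d by (simp add: card_Diff_singleton)
    finally have b: "(\<Sum>c\<in>Rem-{d}. card (F c)) \<le> (card Rem - 1) * (2^(k-1) * 2^k)" .
    have "2^(k-1) * N \<le> card (E k) + (card Rem - 1) * (2^(k-1) * 2^k)" using a b cA by linarith
    note of_nat_mono[OF this, where 'a=real]
    then have "real (2^(k-1) * N) \<le> real (card (E k) + (card Rem - 1) * (2^(k-1) * 2^k))"
      by simp
    also have "\<dots> = real (card (E k)) + real (card Rem - 1) * (2^(k-1) * 2^k)" by simp
    finally have "real (2^(k-1) * N) \<le> real (card (E k)) + real (card Rem - 1) * (2^(k-1) * 2^k)" .
    moreover have "real (card Rem - 1) = real (card Rem) - 1"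
    proof -
      have "Rem \<noteq> {}" using d by auto
      then have "card Rem \<ge> 1" using finR by (simp add: Suc_le_eq card_gt_0_iff)
      then show ?thesis by (simp add: of_nat_diff)
    qed
    ultimately show ?thesis by (simp add: algebra_simps)
  qed
  note of_nat_mono[OF c1, where 'a=real]
  then have "real (card Good) \<ge> (\<Sum>k\<in>{0..K}. real (card (E k)))" by simp
  moreover have "(\<Sum>k\<in>{0..K}. real (card (E k))) = real (card (E 0)) + (\<Sum>k\<in>{1..K}. real (card (E k)))"
    by (simp add: sum.atLeast_Suc_atMost)
  moreover have "(\<Sum>k\<in>{1..K}. real (card (E k))) \<ge> (\<Sum>k=1..K. 2^(k-1) * real N - (real (card Rem) - 1) * 2^(k-1) * 2^k)"
    by (rule sum_mono) (use cEk in auto)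
  ultimately show ?thesis unfolding Good_def N_def using cE0 N_def by simp
qed



lemma choose_K:
  assumes "1 \<le> L" "1 \<le> R" "R \<le> (2::nat)^L"
  shows "\<exists>K<L. 2^L \<le> 2*R*2^K \<and> R*2^K \<le> (2::nat)^L"
  using assms
proof (induction L rule: dec_induct)
  case base
  then show ?case by (intro exI[of _ 0]) auto
next
  case (step L)
  show ?case
  proof (cases "R \<le> 2^L")
    case True
    then obtain K where K: "K < L" "2^L \<le> 2*R*2^K" "R*2^K \<le> (2::nat)^L" using step by auto
    then show ?thesis by (intro exI[of _ "Suc K"]) auto
  next
    case False
    then show ?thesis using step.prems by (intro exI[of _ 0]) auto
  qed
qed

lemma closed_sum:
  fixes N R :: real
  shows "(\<Sum>k=1..K. 2^(k-1) * N - (R - 1) * 2^(k-1) * 2^k) = (2^K - 1) * N - (R - 1) * (2 * 4^K - 2) / 3"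
proof (induction K)
  case 0 then show ?case by simp
next
  case (Suc K)
  have "(\<Sum>k=1..Suc K. 2^(k-1) * N - (R - 1) * 2^(k-1) * 2^k)
      = (\<Sum>k=1..K. 2^(k-1) * N - (R - 1) * 2^(k-1) * 2^k) + (2^K * N - (R - 1) * 2^K * 2^(Suc K))"
    by simp
  also have "\<dots> = (2^K - 1) * N - (R - 1) * (2 * 4^K - 2) / 3 + (2^K * N - (R - 1) * 2^K * 2^(Suc K))"
    using Suc by simp
  also have "(2::real)^K * 2^(Suc K) = 2 * 4^K"
    by (simp add: power_mult_distrib[symmetric])
  then have e: "(R - 1) * 2^K * 2^(Suc K) = (R - 1) * (2 * 4^K)" by (simp add: mult.assoc)
  have "(2^K - 1) * N - (R - 1) * (2 * 4^K - 2) / 3 + (2^K * N - (R - 1) * 2^K * 2^(Suc K))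
      = (2^Suc K - 1) * N - (R - 1) * (2 * 4^Suc K - 2) / 3"
    unfolding e by (simp add: field_simps)
  finally show ?case .
qed

lemma per_turn_real:
  assumes L: "1 \<le> L" and R: "1 \<le> R" "R \<le> (2::nat)^L"
  shows "\<exists>K<L. real (2^L) + (\<Sum>k=1..K. 2^(k-1) * real (2^L) - (real R - 1) * 2^(k-1) * 2^k)
           \<ge> real (2^L) * real (2^L) / (4 * real R)"
proof -
  obtain K where K: "K < L" "2^L \<le> 2*R*2^K" "R*2^K \<le> (2::nat)^L" using choose_K[OF L R] by blast
  define N where "N = real (2^L)"
  define x where "x = (2::real)^K"
  define r where "r = real R"
  have x1: "x \<ge> 1" unfolding x_def by simp
  have r1: "r \<ge> 1" unfolding r_def using R by simp
  have y1: "N \<le> 2 * r * x" unfolding N_def r_def x_def using of_nat_mono[OF K(2), where 'a=real]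
    by simp
  have y2: "r * x \<le> N" unfolding N_def r_def x_def using of_nat_mono[OF K(3), where 'a=real]
    by simp
  have "real (2^L) + (\<Sum>k=1..K. 2^(k-1) * real (2^L) - (real R - 1) * 2^(k-1) * 2^k)
        = N + ((x - 1) * N - (r - 1) * (2 * x^2 - 2) / 3)"
    unfolding N_def r_def x_def closed_sum by (simp add: power_mult_distrib[symmetric] power2_eq_square
        flip: power_mult)
  also have "\<dots> = x * N - (r - 1) * (2 * x^2 - 2) / 3" by (simp add: algebra_simps)
  also have "\<dots> \<ge> x * N - r * (2 * x^2) / 3"
  proof -
    have "(r - 1) * (2 * x^2 - 2) \<le> r * (2 * x^2)"
    proof -
      have "(r - 1) * (2 * x^2 - 2) = r * (2 * x^2) - 2 * r - 2 * x^2 + 2" by (simp add: algebra_simps)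
      moreover have "x^2 \<ge> 1" using x1 by simp
      ultimately show ?thesis using r1 by linarith
    qed
    then show ?thesis by (simp add: divide_right_mono)
  qed
  finally have v: "real (2^L) + (\<Sum>k=1..K. 2^(k-1) * real (2^L) - (real R - 1) * 2^(k-1) * 2^k)
        \<ge> x * N - r * (2 * x^2) / 3" .
  have "N * N / (4 * r) \<le> x * N - r * (2 * x^2) / 3"
  proof -
    have pos: "4 * r > 0" using r1 by simp
    have p: "0 \<le> (r * x - N / 2) * (N - r * x)"
      using y1 y2 by (intro mult_nonneg_nonneg) auto
    have id: "(x * N - r * (2 * x^2) / 3) * (4 * r) - N * N = (N * N + 8 * ((r * x - N / 2) * (N - r * x))) / 3"
      by (simp add: field_simps power2_eq_square)
    have "N * N \<le> (x * N - r * (2 * x^2) / 3) * (4 * r)"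
    proof -
      have "0 \<le> (N * N + 8 * ((r * x - N / 2) * (N - r * x))) / 3" using p by simp
      then show ?thesis using id by linarith
    qed
    then show ?thesis using pos by (simp add: divide_le_eq)
  qed
  then show ?thesis using v K(1) unfolding N_def r_def by (intro exI[of _ K]) auto
qed



definition Cm :: "nat \<Rightarrow> nat" where "Cm k = (if k = 0 then 2 else 2^k)"
definition Mm :: "nat \<Rightarrow> nat" where "Mm k = Cm k * 2^k"
definition Sk :: "nat \<Rightarrow> nat \<Rightarrow> nat \<Rightarrow> nat set \<Rightarrow> nat set" where
  "Sk L rho k X = {x\<in>X. sig L rho x < 2^k}"
definition Wt :: "nat \<Rightarrow> nat \<Rightarrow> nat \<Rightarrow> nat set \<Rightarrow> nat" where
  "Wt L rho k X = (\<Sum>x\<in>Sk L rho k X. 1 + Cm k * sig L rho x) mod Mm k"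
definition Enc :: "nat \<Rightarrow> nat \<Rightarrow> nat set \<Rightarrow> nat" where
  "Enc L rho X = (\<Sum>k<L. Wt L rho k X * prod Mm {..<k})"
definition Dec :: "nat \<Rightarrow> nat \<Rightarrow> nat" where
  "Dec s k = s div prod Mm {..<k} mod Mm k"
definition Upd :: "nat \<Rightarrow> nat \<Rightarrow> nat \<Rightarrow> nat \<Rightarrow> nat" where
  "Upd L rho s c = (\<Sum>k<L. ((Dec s k + (if sig L rho c < 2^k then 1 + Cm k * sig L rho c else 0)) mod Mm k)
                            * prod Mm {..<k})"
definition Kc :: "nat \<Rightarrow> nat \<Rightarrow> nat \<Rightarrow> nat \<Rightarrow> nat" where
  "Kc n L rho k = card (Sk L rho k {1..n})"
definition Tot :: "nat \<Rightarrow> nat \<Rightarrow> nat \<Rightarrow> nat \<Rightarrow> nat" where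
  "Tot n L rho k = (\<Sum>x\<in>Sk L rho k {1..n}. sig L rho x)"
definition tst :: "nat \<Rightarrow> nat \<Rightarrow> nat \<Rightarrow> nat \<Rightarrow> nat \<Rightarrow> bool" where
  "tst n L rho k w = (1 \<le> Kc n L rho k \<and> w mod Cm k = Kc n L rho k - 1)"
definition okp :: "nat \<Rightarrow> nat \<Rightarrow> nat \<Rightarrow> nat \<Rightarrow> nat \<Rightarrow> nat \<Rightarrow> bool" where
  "okp n L rho s k y = (y \<in> {1..n} \<and> sig L rho y < 2^k \<and>
      (Dec s k div Cm k + sig L rho y) mod 2^k = Tot n L rho k mod 2^k)"
definition pick :: "nat \<Rightarrow> nat \<Rightarrow> nat \<Rightarrow> nat \<Rightarrow> nat \<Rightarrow> nat" where
  "pick n L rho s k = (if \<exists>y. okp n L rho s k y then (LEAST y. okp n L rho s k y) else 1)"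
definition Gs :: "nat \<Rightarrow> nat \<Rightarrow> nat \<Rightarrow> nat \<Rightarrow> nat" where
  "Gs n L rho s = (if \<exists>k<L. tst n L rho k (Dec s k)
                   then pick n L rho s (LEAST k. k < L \<and> tst n L rho k (Dec s k)) else 1)"
definition Good :: "nat \<Rightarrow> nat \<Rightarrow> nat \<Rightarrow> nat set \<Rightarrow> nat \<Rightarrow> bool" where
  "Good n L rho X d = (\<exists>k<L. Sk L rho k ({1..n} - X) = {d})"

lemma Cm_ge: "2^k \<le> Cm k" "2 \<le> Cm k"
  unfolding Cm_def by (auto simp: self_le_power)

lemma Mm_pos: "Mm k > 0"
  unfolding Mm_def Cm_def by simp

lemma Wt_lt: "Wt L rho k X < Mm k"
  unfolding Wt_def using Mm_pos by simp

lemma Dec_Enc: "k < L \<Longrightarrow> Dec (Enc L rho X) k = Wt L rho k X"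
  unfolding Dec_def Enc_def by (rule mr_dec) (auto simp: Wt_lt Mm_pos)

lemma prod_Mm: "1 \<le> L \<Longrightarrow> prod Mm {..<L} = 2^(L*L - L + 1)"
proof (induction L rule: dec_induct)
  case base then show ?case by (simp add: Mm_def Cm_def)
next
  case (step L)
  have mL: "Mm L = 2^L * 2^L" using step.hyps by (simp add: Mm_def Cm_def)
  have "prod Mm {..<Suc L} = 2^(L*L - L + 1) * (2^L * 2^L)"
    by (simp only: prod.lessThan_Suc step.IH mL)
  also have "\<dots> = 2^(L*L - L + 1 + L + L)" by (simp only: power_add mult.assoc)
  also have "L*L - L + 1 + L + L = Suc L * Suc L - Suc L + 1"
  proof -
    have "L \<le> L * L" by simp
    then show ?thesis by simp
  qed
  finally show ?case .
qed

lemma prod_Mm_le: "prod Mm {..<L} \<le> 2^(L^2 - L + 2)"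
proof (cases "L = 0")
  case True then show ?thesis by simp
next
  case False
  then have "prod Mm {..<L} = 2^(L*L - L + 1)" by (intro prod_Mm) simp
  also have "\<dots> \<le> 2^(L^2 - L + 2)" by (intro power_increasing) (auto simp: power2_eq_square)
  finally show ?thesis .
qed

lemma Upd_lt: "Upd L rho s c < prod Mm {..<L}"
  unfolding Upd_def by (rule mr_bound) (auto simp: Mm_pos)

lemma Enc_empty: "Enc L rho {} = 0"
  unfolding Enc_def Wt_def Sk_def by simp

lemma Sk_insert: "Sk L rho k (insert c X) = (if sig L rho c < 2^k then insert c (Sk L rho k X) else Sk L rho k X)"
  unfolding Sk_def by auto

lemma Upd_Enc:
  assumes "finite X" "c \<notin> X"
  shows "Upd L rho (Enc L rho X) c = Enc L rho (insert c X)"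
  unfolding Upd_def Enc_def[of L rho "insert c X"]
proof (rule sum.cong[OF refl])
  fix k assume "k \<in> {..<L}"
  then have kL: "k < L" by simp
  have fin: "finite (Sk L rho k X)" using assms(1) unfolding Sk_def by simp
  have nin: "c \<notin> Sk L rho k X" using assms(2) unfolding Sk_def by simp
  have "(Wt L rho k X + (if sig L rho c < 2^k then 1 + Cm k * sig L rho c else 0)) mod Mm k
        = Wt L rho k (insert c X)"
    unfolding Wt_def Sk_insert using fin nin by (simp add: mod_add_left_eq add.commute)
  then show "((Dec (Enc L rho X) k + (if sig L rho c < 2^k then 1 + Cm k * sig L rho c else 0)) mod Mm k)
          * prod Mm {..<k} = Wt L rho k (insert c X) * prod Mm {..<k}"
    using Dec_Enc[OF kL] by simp
qed

lemma Gs_range: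
  assumes "1 \<le> n" shows "Gs n L rho s \<in> {1..n}"
proof -
  have "pick n L rho s k \<in> {1..n}" for k
  proof (cases "\<exists>y. okp n L rho s k y")
    case True
    then have "okp n L rho s k (LEAST y. okp n L rho s k y)" by (rule LeastI_ex)
    then show ?thesis using True unfolding pick_def okp_def by simp
  next
    case False then show ?thesis using assms unfolding pick_def by auto
  qed
  then show ?thesis using assms unfolding Gs_def by simp
qed



lemma mod_split:
  fixes a b C M :: nat assumes "a < C"
  shows "(a + C*b) mod (C*M) = a + C*(b mod M)"
proof -
  have "(a + C*b) div C = b" using assms by simp
  moreover have "(a + C*b) mod C = a" using assms by simp
  ultimately show ?thesis by (simp add: mod_mult2_eq)
qed

lemma mod_add_cancel_nat:
  fixes a b c m :: nat
  assumes "(a + b) mod m = (a + c) mod m" shows "b mod m = c mod m"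
proof -
  have "int (a + b) mod int m = int (a + c) mod int m" using assms by (metis zmod_int)
  then have "int m dvd (int (a + b) - int (a + c))" by (simp only: mod_eq_dvd_iff)
  then have "int m dvd (int b - int c)" by simp
  then have "int b mod int m = int c mod int m" by (simp only: mod_eq_dvd_iff)
  then show ?thesis by (metis zmod_int of_nat_eq_iff)
qed

lemma Gs_correct:
  assumes nN: "n \<le> 2^L" and X: "X \<subseteq> {1..n}" and d: "d \<in> {1..n}" "d \<notin> X"
    and G: "Good n L rho X d"
  shows "Gs n L rho (Enc L rho X) = d"
proof -
  define Rem where "Rem = {1..n} - X"
  have finX: "finite X" using X finite_subset by blast
  define cnt where "cnt k = card (Sk L rho k X)" for k
  define sm where "sm k = (\<Sum>x\<in>Sk L rho k X. sig L rho x)" for k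
  have finS: "finite (Sk L rho k Y)" if "finite Y" for k Y using that unfolding Sk_def by simp
  have Wt_eq: "Wt L rho k X = (cnt k + Cm k * sm k) mod Mm k" for k
  proof -
    have "(\<Sum>x\<in>Sk L rho k X. 1 + Cm k * sig L rho x)
          = (\<Sum>x\<in>Sk L rho k X. (1::nat)) + (\<Sum>x\<in>Sk L rho k X. Cm k * sig L rho x)"
      by (rule sum.distrib)
    also have "\<dots> = cnt k + Cm k * sm k" unfolding cnt_def sm_def by (simp add: sum_distrib_left)
    finally show ?thesis unfolding Wt_def by simp
  qed
  have Kc_eq: "Kc n L rho k = cnt k + card (Sk L rho k Rem)" for k
  proof -
    have "Sk L rho k {1..n} = Sk L rho k X \<union> Sk L rho k Rem" using X unfolding Sk_def Rem_def by auto
    moreover have "Sk L rho k X \<inter> Sk L rho k Rem = {}" unfolding Sk_def Rem_def by auto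
    ultimately show ?thesis unfolding Kc_def cnt_def
      by (simp add: card_Un_disjoint finS finX Rem_def)
  qed
  have injS: "inj_on (sig L rho) {1..n}"
  proof (rule inj_onI)
    fix x y assume "x \<in> {1..n}" "y \<in> {1..n}" "sig L rho x = sig L rho y"
    then show "x = y" using nN sig_inj[of x L y rho] by auto
  qed
  have Kc_le: "Kc n L rho k \<le> 2^k" for k
  proof -
    have "inj_on (sig L rho) (Sk L rho k {1..n})" using injS unfolding Sk_def by (rule inj_on_subset) auto
    moreover have "sig L rho ` Sk L rho k {1..n} \<subseteq> {..<2^k}" unfolding Sk_def by auto
    ultimately have "card (Sk L rho k {1..n}) \<le> card {..<(2::nat)^k}" by (rule card_inj_on_le) simp
    then show ?thesis unfolding Kc_def by simp
  qed
  have Wt_modC: "Wt L rho k X mod Cm k = cnt k mod Cm k" for k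
  proof -
    have "Wt L rho k X mod Cm k = (cnt k + Cm k * sm k) mod Cm k"
      unfolding Wt_eq Mm_def by (simp add: mod_mod_cancel)
    then show ?thesis by simp
  qed
  have tst_imp: "card (Sk L rho k Rem) = 1" if t: "tst n L rho k (Wt L rho k X)" for k
  proof -
    have K1: "1 \<le> Kc n L rho k" and m: "cnt k mod Cm k = Kc n L rho k - 1"
      using t Wt_modC unfolding tst_def by auto
    have le: "cnt k \<le> Kc n L rho k" using Kc_eq by simp
    show ?thesis
    proof (cases "cnt k < Cm k")
      case True
      then have "cnt k = Kc n L rho k - 1" using m by simp
      then show ?thesis using Kc_eq[of k] K1 by simp
    next
      case False
      then have "Cm k \<le> Kc n L rho k" using le by simp
      then have "Cm k = 2^k" "cnt k = Cm k" using Kc_le[of k] Cm_ge[of k] le False by auto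
      then have "Kc n L rho k - 1 = 0" using m by simp
      then show ?thesis using \<open>Cm k \<le> Kc n L rho k\<close> Cm_ge(2)[of k] by simp
    qed
  qed
  have imp_tst: "tst n L rho k (Wt L rho k X)" if c: "card (Sk L rho k Rem) = 1" for k
  proof -
    have e: "cnt k = Kc n L rho k - 1" "1 \<le> Kc n L rho k" using Kc_eq[of k] c by auto
    have "cnt k < Cm k" using e Kc_le[of k] Cm_ge[of k] by linarith
    then show ?thesis unfolding tst_def using Wt_modC e by simp
  qed
  obtain k1 where k1: "k1 < L" "Sk L rho k1 Rem = {d}" using G unfolding Good_def Rem_def by blast
  have t1: "tst n L rho k1 (Dec (Enc L rho X) k1)" using imp_tst[of k1] k1 Dec_Enc[OF k1(1)] by simp
  define k0 where "k0 = (LEAST k. k < L \<and> tst n L rho k (Dec (Enc L rho X) k))"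
  have ex: "\<exists>k<L. tst n L rho k (Dec (Enc L rho X) k)" using t1 k1 by blast
  have k0: "k0 < L" "tst n L rho k0 (Dec (Enc L rho X) k0)"
    using LeastI_ex[of "\<lambda>k. k < L \<and> tst n L rho k (Dec (Enc L rho X) k)"] ex unfolding k0_def by auto
  have k01: "k0 \<le> k1" unfolding k0_def using t1 k1(1) by (intro Least_le) simp
  have c0: "card (Sk L rho k0 Rem) = 1" using tst_imp k0 Dec_Enc[OF k0(1)] by simp
  have "Sk L rho k0 Rem \<subseteq> Sk L rho k1 Rem"
  proof -
    have p: "(2::nat)^k0 \<le> 2^k1" using k01 by (intro power_increasing) auto
    show ?thesis unfolding Sk_def using order_less_le_trans[OF _ p] by auto
  qed
  moreover obtain z where z: "Sk L rho k0 Rem = {z}" using c0 by (rule card_1_singletonE)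
  ultimately have S0: "Sk L rho k0 Rem = {d}" using k1(2) by auto
  have cnt0: "cnt k0 = Kc n L rho k0 - 1" using Kc_eq[of k0] c0 by simp
  have cntC: "cnt k0 < Cm k0" using cnt0 Kc_le[of k0] Cm_ge[of k0] c0 Kc_eq[of k0] by linarith
  have Wdiv: "Wt L rho k0 X div Cm k0 = sm k0 mod 2^k0"
  proof -
    have "Wt L rho k0 X = cnt k0 + Cm k0 * (sm k0 mod 2^k0)"
      unfolding Wt_eq Mm_def using cntC by (rule mod_split)
    then show ?thesis using cntC by simp
  qed
  have dS: "d \<in> Sk L rho k0 Rem" using S0 by simp
  then have sd: "sig L rho d < 2^k0" unfolding Sk_def by simp
  have Tot_eq: "Tot n L rho k0 = sm k0 + sig L rho d"
  proof -
    have "Sk L rho k0 {1..n} = insert d (Sk L rho k0 X)"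
    proof (intro equalityI subsetI)
      fix x assume x: "x \<in> Sk L rho k0 {1..n}"
      show "x \<in> insert d (Sk L rho k0 X)"
      proof (cases "x \<in> X")
        case True then show ?thesis using x unfolding Sk_def by auto
      next
        case False
        then have "x \<in> Sk L rho k0 Rem" using x unfolding Sk_def Rem_def by auto
        then show ?thesis using S0 by auto
      qed
    next
      fix x assume "x \<in> insert d (Sk L rho k0 X)"
      then show "x \<in> Sk L rho k0 {1..n}" using X sd d unfolding Sk_def by auto
    qed
    moreover have "d \<notin> Sk L rho k0 X" using d unfolding Sk_def by simp
    ultimately show ?thesis unfolding Tot_def sm_def using finS finX by simp
  qed
  have okd: "okp n L rho (Enc L rho X) k0 d"
    unfolding okp_def Dec_Enc[OF k0(1)] Wdiv Tot_eq using d sd by (simp add: mod_add_left_eq)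
  have uniq: "y = d" if y: "okp n L rho (Enc L rho X) k0 y" for y
  proof -
    have yy: "y \<in> {1..n}" "sig L rho y < 2^k0"
      "(sm k0 mod 2^k0 + sig L rho y) mod 2^k0 = (sm k0 + sig L rho d) mod 2^k0"
      using y unfolding okp_def Dec_Enc[OF k0(1)] Wdiv Tot_eq by auto
    then have "(sm k0 + sig L rho y) mod 2^k0 = (sm k0 + sig L rho d) mod 2^k0"
      by (simp add: mod_add_left_eq)
    then have "sig L rho y mod 2^k0 = sig L rho d mod 2^k0" by (rule mod_add_cancel_nat)
    then have "sig L rho y = sig L rho d" using yy(2) sd by simp
    then show ?thesis using injS yy(1) d(1) by (auto dest: inj_onD)
  qed
  have "(LEAST y. okp n L rho (Enc L rho X) k0 y) = d"
  proof (rule Least_equality)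
    show "okp n L rho (Enc L rho X) k0 d" by (rule okd)
  next
    fix y assume "okp n L rho (Enc L rho X) k0 y"
    then have "y = d" by (rule uniq)
    then show "d \<le> y" by simp
  qed
  then have "pick n L rho (Enc L rho X) k0 = d"
    unfolding pick_def using okd by auto
  then show ?thesis unfolding Gs_def using ex by (simp add: k0_def)
qed



lemma sc_bound:
  assumes nN: "n \<le> 2^L"
  shows "distinct cs \<Longrightarrow> finite X \<Longrightarrow> X \<inter> set cs = {} \<Longrightarrow> X \<union> set cs \<subseteq> {1..n} \<Longrightarrow>
    (\<Sum>i<length cs. if Good n L rho (X \<union> set (take i cs)) (cs!i) then 1 else 0)
      \<le> sc (Gs n L) (Upd L) rho (Enc L rho X) cs"
proof (induction cs arbitrary: X)
  case Nil then show ?case by simp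
next
  case (Cons c cs)
  have cX: "c \<notin> X" using Cons.prems by auto
  have IH: "(\<Sum>i<length cs. if Good n L rho (insert c X \<union> set (take i cs)) (cs!i) then 1 else 0)
      \<le> sc (Gs n L) (Upd L) rho (Enc L rho (insert c X)) cs"
    using Cons.prems by (intro Cons.IH) auto
  have first: "(if Good n L rho X c then 1 else 0) \<le> (if Gs n L rho (Enc L rho X) = c then 1 else (0::nat))"
  proof (cases "Good n L rho X c")
    case True
    have "Gs n L rho (Enc L rho X) = c"
      by (rule Gs_correct[OF nN _ _ cX True]) (use Cons.prems in auto)
    then show ?thesis by simp
  qed simp
  have "(\<Sum>i<length (c#cs). if Good n L rho (X \<union> set (take i (c#cs))) ((c#cs)!i) then 1 else (0::nat))
      = (if Good n L rho X c then 1 else 0)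
        + (\<Sum>i<length cs. if Good n L rho (insert c X \<union> set (take i cs)) (cs!i) then 1 else 0)"
    by (simp only: length_Cons sum.lessThan_Suc_shift) (simp add: insert_commute)
  also have "\<dots> \<le> (if Gs n L rho (Enc L rho X) = c then 1 else 0)
        + sc (Gs n L) (Upd L) rho (Enc L rho (insert c X)) cs"
    using first IH by (rule add_mono)
  also have "\<dots> = sc (Gs n L) (Upd L) rho (Enc L rho X) (c#cs)"
    using Upd_Enc[OF Cons.prems(2) cX] by simp
  finally show ?case .
qed

lemma nth_notin_take:
  assumes "distinct xs" "i < length xs" shows "xs ! i \<notin> set (take i xs)"
proof
  assume "xs ! i \<in> set (take i xs)"
  then obtain j where j: "j < length (take i xs)" "take i xs ! j = xs ! i" by (auto simp: in_set_conv_nth)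
  then have "j < i" "xs ! j = xs ! i" by auto
  then show False using assms nth_eq_iff_index_eq by fastforce
qed



lemma L_facts:
  fixes n :: nat assumes n: "n \<ge> 1"
  shows "n \<le> 2 ^ nat \<lceil>log 2 (real n)\<rceil>" and "n \<ge> 2 \<Longrightarrow> 1 \<le> nat \<lceil>log 2 (real n)\<rceil>"
proof -
  have lg: "log 2 (real n) \<ge> 0" using n by simp
  then have c0: "\<lceil>log 2 (real n)\<rceil> \<ge> 0" by simp
  have "real n = 2 powr (log 2 (real n))" using n by simp
  also have "\<dots> \<le> 2 powr (real (nat \<lceil>log 2 (real n)\<rceil>))"
    using c0 by (intro powr_mono) (auto simp: le_of_int_ceiling)
  also have "\<dots> = 2 ^ nat \<lceil>log 2 (real n)\<rceil>" by (rule powr_realpow) simp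
  finally have "real n \<le> 2 ^ nat \<lceil>log 2 (real n)\<rceil>" .
  then show "n \<le> 2 ^ nat \<lceil>log 2 (real n)\<rceil>"
    by (metis of_nat_le_iff of_nat_numeral of_nat_power)
  assume "n \<ge> 2"
  then have "log 2 (real n) \<ge> 1" by (simp add: le_log_iff)
  then have "(1::int) \<le> \<lceil>log 2 (real n)\<rceil>" by (metis ceiling_mono ceiling_one)
  then show "1 \<le> nat \<lceil>log 2 (real n)\<rceil>" by (simp add: le_nat_iff)
qed

lemma sum_if_card:
  fixes M :: nat shows "(\<Sum>x<M. if P x then 1 else (0::real)) = real (card {x. x < M \<and> P x})"
proof -
  have "(\<Sum>x\<in>{x\<in>{..<M}. P x}. (1::real)) = (\<Sum>x<M. if P x then 1 else 0)"
    by (rule sum.inter_filter) simp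
  moreover have "{x\<in>{..<M}. P x} = {x. x < M \<and> P x}" by auto
  ultimately show ?thesis by simp
qed

lemma harm_rev: "(\<Sum>i<n. 1 / (4 * real (n - i))) = harm n / 4"
proof -
  have "(\<Sum>i<n. 1 / (4 * real (n - i))) = (\<Sum>i<n. (\<lambda>k. inverse (real (Suc k)) / 4) (n - Suc i))"
    by (intro sum.cong refl) (auto simp: Suc_diff_Suc field_simps)
  also have "\<dots> = (\<Sum>k<n. inverse (real (Suc k)) / 4)" by (rule sum.nat_diff_reindex)
  also have "\<dots> = harm n / 4" by (simp add: harm_altdef sum_divide_distrib)
  finally show ?thesis .
qed

theorem mainTheorem3:
  fixes n :: nat
  assumes "n \<ge> 1"
  defines "L \<equiv> nat \<lceil>log 2 (real n)\<rceil>"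
  shows "\<exists>guess upd s0.
           valid_guesser n (L ^ 2 - L + 2) (2 * L) guess upd s0 \<and>
           (\<forall>deck. distinct deck \<and> set deck = {1..n} \<longrightarrow>
              expected_score (2 * L) guess upd s0 deck \<ge> ln (real n) / 4)"
proof -
  have nN: "n \<le> 2^L" unfolding L_def using L_facts(1)[OF assms(1)] .
  have L1: "n \<ge> 2 \<Longrightarrow> 1 \<le> L" unfolding L_def using L_facts(2)[OF assms(1)] .
  let ?g = "\<lambda>rho s. return_pmf (Gs n L rho s)"
  let ?u = "\<lambda>rho s c. return_pmf (Upd L rho s c)"
  have valid: "valid_guesser n (L ^ 2 - L + 2) (2 * L) ?g ?u 0"
    unfolding valid_guesser_def
  proof (intro conjI allI impI ballI)
    fix rho s show "set_pmf (?g rho s) \<subseteq> {1..n}" using Gs_range[OF assms(1)] by simp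
  next
    fix rho s c show "set_pmf (?u rho s c) \<subseteq> {..<2 ^ (L ^ 2 - L + 2)}"
      using Upd_lt[of L rho s c] prod_Mm_le[of L] by simp
  qed simp
  have score: "expected_score (2 * L) ?g ?u 0 deck \<ge> ln (real n) / 4"
    if deck: "distinct deck" "set deck = {1..n}" for deck
  proof -
    have len: "length deck = n" using deck distinct_card by fastforce
    have NN: "(2::nat)^(2*L) = 2^L * 2^L" by (simp add: power_add mult_2)
    have NNr: "(2::real)^(2*L) = 2^L * 2^L" by (simp add: power_add mult_2)
    have E: "expected_score (2 * L) ?g ?u 0 deck
          = (\<Sum>rho<2^L*2^L. real (sc (Gs n L) (Upd L) rho 0 deck)) / (2^L*2^L)"
      unfolding expected_det NN NNr by simp
    have nonneg: "0 \<le> (\<Sum>rho<2^L*2^L. real (sc (Gs n L) (Upd L) rho 0 deck)) / (2^L*2^L)"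
      by (intro divide_nonneg_nonneg sum_nonneg) auto
    show ?thesis
    proof (cases "n = 1")
      case True then show ?thesis using E nonneg by simp
    next
      case False
      then have n2: "n \<ge> 2" using assms(1) by simp
      have L1': "1 \<le> L" using L1 n2 by simp
      define P where "P i rho = Good n L rho (set (take i deck)) (deck!i)" for i rho
      have sc_ge: "(\<Sum>i<n. if P i rho then 1 else (0::real)) \<le> real (sc (Gs n L) (Upd L) rho 0 deck)" for rho
      proof -
        have "(\<Sum>i<length deck. if Good n L rho ({} \<union> set (take i deck)) (deck!i) then 1 else 0)
              \<le> sc (Gs n L) (Upd L) rho (Enc L rho {}) deck"
          by (rule sc_bound[OF nN]) (use deck in auto)
        then have h: "(\<Sum>i<n. if P i rho then 1 else 0) \<le> sc (Gs n L) (Upd L) rho 0 deck"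
          unfolding P_def len Enc_empty by simp
        have "real (\<Sum>i<n. if P i rho then 1 else 0) \<le> real (sc (Gs n L) (Upd L) rho 0 deck)"
          using h by (rule of_nat_mono)
        moreover have "real (\<Sum>i<n. if P i rho then 1 else 0) = (\<Sum>i<n. if P i rho then 1 else (0::real))"
          unfolding of_nat_sum by (intro sum.cong refl) simp
        ultimately show ?thesis by simp
      qed
      have cnt: "real (card {rho. rho < 2^L*2^L \<and> P i rho}) \<ge> real (2^L) * real (2^L) / (4 * real (n - i))"
        if i: "i < n" for i
      proof -
        define Rem where "Rem = {1..n} - set (take i deck)"
        define d where "d = deck ! i"
        have sub: "set (take i deck) \<subseteq> {1..n}" using deck(2) set_take_subset by fastforce
        have cT: "card (set (take i deck)) = i" using deck(1) i len by (simp add: distinct_card)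
        have cR: "card Rem = n - i" unfolding Rem_def using sub cT by (simp add: card_Diff_subset)
        have dR: "d \<in> Rem" unfolding Rem_def d_def using nth_notin_take[OF deck(1)] i len deck(2)
          by (metis Diff_iff nth_mem)
        obtain K where K: "K < L" and KK: "real (2^L) + (\<Sum>k=1..K. 2^(k-1) * real (2^L) - (real (n - i) - 1) * 2^(k-1) * 2^k)
           \<ge> real (2^L) * real (2^L) / (4 * real (n - i))"
        proof -
          have R1: "1 \<le> n - i" "n - i \<le> 2^L" using i nN by auto
          show ?thesis using per_turn_real[OF L1' R1] that by blast
        qed
        have "real (card {rho. rho < 2^L*2^L \<and> (\<exists>k<L. {x\<in>Rem. sig L rho x < 2^k} = {d})})
            \<ge> real (2^L) + (\<Sum>k=1..K. 2^(k-1) * real (2^L) - (real (card Rem) - 1) * 2^(k-1) * 2^k)"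
          by (rule count_good[OF nN _ dR K]) (auto simp: Rem_def)
        moreover have "{rho. rho < 2^L*2^L \<and> (\<exists>k<L. {x\<in>Rem. sig L rho x < 2^k} = {d})}
                     = {rho. rho < 2^L*2^L \<and> P i rho}"
          unfolding P_def Good_def Sk_def Rem_def d_def by simp
        ultimately show ?thesis using KK cR by simp
      qed
      have "(\<Sum>rho<2^L*2^L. real (sc (Gs n L) (Upd L) rho 0 deck))
          \<ge> (\<Sum>rho<2^L*2^L. \<Sum>i<n. if P i rho then 1 else (0::real))"
        by (intro sum_mono sc_ge)
      also have "(\<Sum>rho<2^L*2^L. \<Sum>i<n. if P i rho then 1 else (0::real))
          = (\<Sum>i<n. \<Sum>rho<2^L*2^L. if P i rho then 1 else (0::real))" by (rule sum.swap)
      also have "\<dots> = (\<Sum>i<n. real (card {rho. rho < 2^L*2^L \<and> P i rho}))"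
        by (simp add: sum_if_card)
      also have "\<dots> \<ge> (\<Sum>i<n. real (2^L) * real (2^L) / (4 * real (n - i)))"
        by (intro sum_mono cnt) simp
      finally have S: "(\<Sum>rho<2^L*2^L. real (sc (Gs n L) (Upd L) rho 0 deck))
          \<ge> real (2^L) * real (2^L) * (\<Sum>i<n. 1 / (4 * real (n - i)))"
        by (simp add: sum_distrib_left)
      have pos: "(0::real) < 2^L * 2^L" by simp
      have "harm n / 4 \<le> (\<Sum>rho<2^L*2^L. real (sc (Gs n L) (Upd L) rho 0 deck)) / (2^L*2^L)"
        using S pos unfolding harm_rev by (simp add: le_divide_eq mult.commute)
      moreover have "ln (real n) \<le> harm n"
      proof -
        have "ln (real n) \<le> ln (real n + 1)" using assms(1) by simp
        also have "\<dots> \<le> harm n" by (rule ln_le_harm)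
        finally show ?thesis .
      qed
      ultimately show ?thesis using E by simp
    qed
  qed
  show ?thesis using valid score by blast
qed


end
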